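(* Let $n$ be an odd positive integer, and let $\mathcal{C}_i^{(n)}$ denote the $2$-cyclotomic coset of $i$ modulo $n$. Let $i,j$ with $0\le i<j\le n-1$ be integers not belonging to the same cyclotomic coset modulo $n$. Let $g$ be a positive integer with $(2^g-1)\mid n$. Suppose there exists an integer $r$ with $0<r<2^g-1$ and $\gcd(r,2^g-1)=1$ such that both $i$ and $j$ lie in $\mathcal{C}_r^{(2^g-1)}$, i.e. $i\bmod (2^g-1)$ and $j \bmod (2^g-1)$ belong to $\{r2^k \bmod (2^g-1): k\ge 0\}$. Then the binary cyclic code of length $n$ with generator polynomial $M_i(x)\cdot M_j(x)$ has minimum distance $d\le 3$. If moreover $\gcd(n,i,j)=1$, then $d=3$.
   Context: For odd $n$, $\alpha$ denotes a primitive $n$th root of unity in an extension field of $\mathbb{F}_2$. The cyclotomic coset of $r$ modulo $N$ (over $\mathbb{F}_2$) is $\mathcal{C}_r^{(N)}=\{r2^k \bmod N: k=0,1,\dots\}$. $M_i(x)=\prod_{t\in\mathcal{C}_i^{(n)}}(x-\alpha^t)\in\mathbb{F}_2[x]$ is the minimal polynomial of $\alpha^i$. The binary cyclic code with generator polynomial $G(x)\mid x^n-1$ is $\{c(x)\in\mathbb{F}_2[x]/(x^n-1): G(x)\mid c(x)\}$. *)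

theory Defs
  imports "HOL-Computational_Algebra.Polynomial"
begin

definition cyc_coset :: "nat \<Rightarrow> nat \<Rightarrow> nat set" where
  "cyc_coset N r = {r * 2 ^ k mod N | k. True}"

definition prim_root :: "nat \<Rightarrow> 'a::field \<Rightarrow> bool" where
  "prim_root n \<alpha> \<longleftrightarrow> \<alpha> ^ n = 1 \<and> (\<forall>k. 0 < k \<and> k < n \<longrightarrow> \<alpha> ^ k \<noteq> 1)"

definition min_poly :: "nat \<Rightarrow> 'a::field \<Rightarrow> nat \<Rightarrow> 'a poly" where
  "min_poly n \<alpha> i = (\<Prod>t\<in>cyc_coset n i. [:- (\<alpha> ^ t), 1:])"

text \<open>Binary polynomials: all coefficients lie in the prime field {0,1}
  (the field is assumed to have characteristic 2).\<close>
definition binary_poly :: "'a::field poly \<Rightarrow> bool" where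
  "binary_poly c \<longleftrightarrow> (\<forall>k. coeff c k \<in> {0, 1})"

text \<open>Binary cyclic code of length n with generator G: codewords are represented by
  their unique representatives of degree < n in F_2[x]/(x^n - 1).\<close>
definition cyclic_code :: "nat \<Rightarrow> 'a::field poly \<Rightarrow> 'a poly set" where
  "cyclic_code n G = {c. binary_poly c \<and> (c = 0 \<or> degree c < n) \<and> G dvd c}"

definition hweight :: "'a::zero poly \<Rightarrow> nat" where
  "hweight c = card {k. coeff c k \<noteq> 0}"

definition min_dist :: "'a::zero poly set \<Rightarrow> nat" where
  "min_dist C = Inf {hweight c | c. c \<in> C \<and> c \<noteq> 0}"

end

theory Submission
  imports Defs "HOL-Number_Theory.Number_Theory"
begin

lemma char2_two: assumes "CHAR('a::field) = 2" shows "(2::'a) = 0"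
  using of_nat_CHAR[where 'a='a] assms by simp

lemma char2_frob:
  fixes x y :: "'a::field"
  assumes "CHAR('a) = 2"
  shows "(x + y) ^ (2 ^ k) = x ^ (2 ^ k) + y ^ (2 ^ k)"
proof (induction k)
  case 0 then show ?case by simp
next
  case (Suc k)
  have h: "(u + v) ^ 2 = u ^ 2 + v ^ 2" for u v :: 'a
  proof -
    have "(u + v) ^ 2 = u^2 + v^2 + 2 * u * v" by (simp add: power2_eq_square algebra_simps)
    then show ?thesis using char2_two[OF assms] by simp
  qed
  have "(x + y) ^ (2 ^ Suc k) = ((x + y) ^ (2 ^ k)) ^ 2" by (simp add: power_mult[symmetric] mult.commute)
  also have "\<dots> = (x ^ (2 ^ k))^2 + (y ^ (2 ^ k))^2" using Suc h by simp
  also have "\<dots> = x ^ (2 ^ Suc k) + y ^ (2 ^ Suc k)" by (simp add: power_mult[symmetric] mult.commute)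
  finally show ?case .
qed

lemma char2_add_self: assumes "CHAR('a::field) = 2" shows "(x::'a) + x = 0"
proof -
  have "x + x = 2 * x" by simp
  then show ?thesis using char2_two[OF assms] by simp
qed

lemma char2_add_eq0: assumes "CHAR('a::field) = 2" and "(x::'a) + y = 0" shows "x = y"
proof -
  have "x = - y" using assms(2) by (simp add: eq_neg_iff_add_eq_0)
  moreover have "- y = y" using char2_add_self[OF assms(1), of y] by (simp add: minus_unique)
  ultimately show ?thesis by simp
qed

lemma prod_linear_dvd:
  fixes c :: "'a::field poly"
  assumes "finite A" "\<forall>a\<in>A. poly c a = 0"
  shows "(\<Prod>a\<in>A. [:-a,1:]) dvd c"
  using assms
proof (induction A arbitrary: c rule: finite_induct)
  case empty then show ?case by simp
next
  case (insert a A)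
  then have "[:-a,1:] dvd c" by (simp add: poly_eq_0_iff_dvd[symmetric])
  then obtain q where q: "c = [:-a,1:] * q" by (auto elim: dvdE)
  have "\<forall>b\<in>A. poly q b = 0"
  proof
    fix b assume "b \<in> A"
    then have "b \<noteq> a" "poly c b = 0" using insert by auto
    then show "poly q b = 0" using q by simp
  qed
  then have "(\<Prod>a\<in>A. [:-a,1:]) dvd q" using insert.IH by blast
  then have "[:-a,1:] * (\<Prod>a\<in>A. [:-a,1:]) dvd [:-a,1:] * q" by (rule mult_dvd_mono[OF dvd_refl])
  then show ?case by (simp only: prod.insert[OF insert(1,2)] q)
qed

lemma pow_eq1_mod:
  fixes \<alpha> :: "'a::field"
  assumes "prim_root n \<alpha>" "n > 0" "\<alpha> ^ k = 1"
  shows "n dvd k"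
proof -
  have "\<alpha> ^ k = \<alpha> ^ (n * (k div n) + k mod n)" by simp
  also have "\<dots> = (\<alpha> ^ n) ^ (k div n) * \<alpha> ^ (k mod n)" by (simp only: power_add power_mult)
  finally have "\<alpha> ^ k = (\<alpha> ^ n) ^ (k div n) * \<alpha> ^ (k mod n)" .
  then have "\<alpha> ^ (k mod n) = 1" using assms unfolding prim_root_def by simp
  then have "k mod n = 0" using assms unfolding prim_root_def
    by (meson mod_less_divisor neq0_conv)
  then show ?thesis by auto
qed

lemma pow_mod_eq:
  fixes \<alpha> :: "'a::field"
  assumes "\<alpha> ^ n = 1"
  shows "\<alpha> ^ k = \<alpha> ^ (k mod n)"
proof -
  have "\<alpha> ^ k = \<alpha> ^ (n * (k div n) + k mod n)" by simp
  also have "\<dots> = (\<alpha> ^ n) ^ (k div n) * \<alpha> ^ (k mod n)" by (simp only: power_add power_mult)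
  finally have "\<alpha> ^ k = (\<alpha> ^ n) ^ (k div n) * \<alpha> ^ (k mod n)" .
  then show ?thesis using assms by simp
qed

lemma coset_disjoint:
  assumes "odd n" "n > 0" "j < n" "j \<notin> cyc_coset n i"
  shows "cyc_coset n i \<inter> cyc_coset n j = {}"
proof (rule ccontr)
  assume "cyc_coset n i \<inter> cyc_coset n j \<noteq> {}"
  then obtain a b where ab: "i * 2^a mod n = j * 2^b mod n" unfolding cyc_coset_def by auto
  define T where "T = totient n"
  have T1: "T \<ge> 1" using assms(2) totient_gt_0_iff[of n] unfolding T_def by linarith
  have cop: "coprime 2 n" using assms(1) by simp
  have e: "[2 ^ T = 1] (mod n)" using euler_theorem[OF cop] unfolding T_def .
  have e2: "[2 ^ (T*b) = 1] (mod n)" using cong_pow[OF e, of b] by (simp add: power_mult)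
  have Tb: "T * b \<ge> b" using T1 by (metis mult_1 mult_le_mono1)
  have c1: "[j = j * 2 ^ (T*b)] (mod n)" using cong_sym[OF cong_mult[OF cong_refl[of j] e2]] by simp
  have p1: "(2::nat)^(T*b) = 2^b * 2^(T*b-b)" using Tb by (metis le_add_diff_inverse power_add)
  have c2: "[j*2^b = i*2^a] (mod n)" using ab by (simp add: cong_def)
  have c3: "[(j * 2^b) * 2^(T*b - b) = (i * 2^a) * 2^(T*b - b)] (mod n)"
    using c2 by (rule cong_mult[OF _ cong_refl])
  have c4: "[j = (j * 2^b) * 2^(T*b - b)] (mod n)" using c1 p1 by (simp only: mult.assoc)
  have c5: "[j = i * 2 ^ (a + (T*b - b))] (mod n)" using cong_trans[OF c4 c3] by (simp only: power_add mult.assoc)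
  then have "j mod n = i * 2 ^ (a + (T*b - b)) mod n" unfolding cong_def .
  then have "j = i * 2 ^ (a + (T*b - b)) mod n" using assms(3) by simp
  then have "j \<in> cyc_coset n i" unfolding cyc_coset_def by blast
  then show False using assms(4) by simp
qed


lemma prim_nonzero: assumes "prim_root n (\<alpha>::'a::field)" "n > 0" shows "\<alpha> \<noteq> 0"
  using assms unfolding prim_root_def by (metis power_0_left less_not_refl zero_neq_one)

lemma pow_eq_dvd:
  fixes \<alpha> :: "'a::field"
  assumes "prim_root n \<alpha>" "n > 0" "x \<le> y" "\<alpha> ^ x = \<alpha> ^ y"
  shows "n dvd (y - x)"
proof -
  have nz: "\<alpha> ^ x \<noteq> 0" using prim_nonzero[OF assms(1,2)] by simp
  have "\<alpha> ^ y = \<alpha> ^ x * \<alpha> ^ (y - x)" using assms(3) by (simp flip: power_add)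
  then have "\<alpha> ^ (y - x) = 1" using assms(4) nz by (metis mult_cancel_left1)
  then show ?thesis using pow_eq1_mod[OF assms(1,2)] by blast
qed

lemma pow_inj:
  fixes \<alpha> :: "'a::field"
  assumes "prim_root n \<alpha>" "n > 0"
  shows "inj_on (\<lambda>t. \<alpha> ^ t) {..<n}"
proof (rule inj_onI)
  fix x y assume xy: "x \<in> {..<n}" "y \<in> {..<n}" "\<alpha> ^ x = \<alpha> ^ y"
  show "x = y"
  proof (rule ccontr)
    assume "x \<noteq> y"
    then consider "x < y" | "y < x" by linarith
    then show False
    proof cases
      case 1
      then have "n dvd (y - x)" using pow_eq_dvd[OF assms, of x y] xy by simp
      moreover have "0 < y - x" "y - x < n" using 1 xy by auto
      ultimately show False using nat_dvd_not_less by blast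
    next
      case 2
      then have "n dvd (x - y)" using pow_eq_dvd[OF assms, of y x] xy by simp
      moreover have "0 < x - y" "x - y < n" using 2 xy by auto
      ultimately show False using nat_dvd_not_less by blast
    qed
  qed
qed

lemma coset_sub: "n > 0 \<Longrightarrow> cyc_coset n i \<subseteq> {..<n}"
  unfolding cyc_coset_def by auto

lemma coset_self: "i < n \<Longrightarrow> i \<in> cyc_coset n i"
  unfolding cyc_coset_def by (rule CollectI, rule exI[of _ 0]) simp

lemma coset_mod:
  assumes "m dvd n" "i mod m \<in> cyc_coset m r" "t \<in> cyc_coset n i"
  shows "t mod m \<in> cyc_coset m r"
proof -
  obtain a where a: "t = i * 2^a mod n" using assms(3) unfolding cyc_coset_def by auto
  obtain k where k: "i mod m = r * 2^k mod m" using assms(2) unfolding cyc_coset_def by auto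
  have "t mod m = i * 2^a mod m" using a assms(1) by (simp add: mod_mod_cancel)
  also have "\<dots> = (i mod m) * 2^a mod m" by (simp add: mod_mult_left_eq)
  also have "\<dots> = (r * 2^k mod m) * 2^a mod m" using k by simp
  also have "\<dots> = r * 2^k * 2^a mod m" by (simp add: mod_mult_left_eq)
  also have "\<dots> = r * 2^(k+a) mod m" by (simp add: power_add mult.assoc)
  finally show ?thesis unfolding cyc_coset_def by blast
qed


lemma gen_dvd:
  fixes \<alpha> :: "'a::field" and c :: "'a poly"
  assumes "prim_root n \<alpha>" "n > 0" "odd n" "j < n" "j \<notin> cyc_coset n i"
    and roots: "\<And>t. t \<in> cyc_coset n i \<union> cyc_coset n j \<Longrightarrow> poly c (\<alpha> ^ t) = 0"
  shows "min_poly n \<alpha> i * min_poly n \<alpha> j dvd c"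
proof -
  let ?U = "cyc_coset n i \<union> cyc_coset n j"
  have fi: "finite (cyc_coset n i)" "finite (cyc_coset n j)"
    using coset_sub[OF assms(2)] finite_subset by blast+
  have dis: "cyc_coset n i \<inter> cyc_coset n j = {}" using coset_disjoint assms(3,2,4,5) by blast
  have inj: "inj_on (\<lambda>t. \<alpha> ^ t) ?U"
    using inj_on_subset[OF pow_inj[OF assms(1,2)]] coset_sub[OF assms(2)] by blast
  have "min_poly n \<alpha> i * min_poly n \<alpha> j = (\<Prod>t\<in>?U. [:-(\<alpha>^t),1:])"
    unfolding min_poly_def by (rule prod.union_disjoint[OF fi dis, symmetric])
  also have "\<dots> = (\<Prod>a\<in>(\<lambda>t. \<alpha> ^ t) ` ?U. [:-a,1:])"
    using prod.reindex[OF inj, of "\<lambda>a. [:-a,1:]"] by simp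
  also have "\<dots> dvd c"
    using fi roots by (intro prod_linear_dvd) auto
  finally show ?thesis .
qed

lemma factor_root:
  fixes \<alpha> :: "'a::field" and c :: "'a poly"
  assumes "n > 0" "i < n" "min_poly n \<alpha> i dvd c"
  shows "poly c (\<alpha> ^ i) = 0"
proof -
  have fi: "finite (cyc_coset n i)" using coset_sub[OF assms(1)] finite_subset by blast
  have "[:-(\<alpha>^i),1:] dvd min_poly n \<alpha> i"
    unfolding min_poly_def using dvd_prodI[OF fi coset_self[OF assms(2)], of "\<lambda>t. [:-(\<alpha>^t),1:]"] by simp
  then have "[:-(\<alpha>^i),1:] dvd c" using assms(3) dvd_trans by blast
  then show ?thesis by (simp add: poly_eq_0_iff_dvd)
qed


lemma binary_sum:
  fixes c :: "'a::field poly"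
  assumes "binary_poly c"
  shows "poly c x = (\<Sum>k\<in>{k. Polynomial.coeff c k \<noteq> 0}. x ^ k)"
proof -
  let ?K = "{k. Polynomial.coeff c k \<noteq> 0}"
  have fin: "finite ?K"
    by (rule finite_subset[of _ "{..degree c}"]) (auto intro: le_degree)
  have "c = (\<Sum>k\<in>?K. Polynomial.monom 1 k)"
  proof (rule poly_eqI)
    fix m
    have "Polynomial.coeff (\<Sum>k\<in>?K. Polynomial.monom 1 k) m = (\<Sum>k\<in>?K. if k = m then 1 else 0)"
      by (simp add: coeff_sum coeff_monom)
    also have "\<dots> = (if m \<in> ?K then 1 else 0)" using fin by (simp add: sum.delta)
    also have "\<dots> = Polynomial.coeff c m" using assms unfolding binary_poly_def by auto
    finally show "Polynomial.coeff c m = Polynomial.coeff (\<Sum>k\<in>?K. Polynomial.monom 1 k) m" by simp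
  qed
  then have "poly c x = poly (\<Sum>k\<in>?K. Polynomial.monom 1 k) x" by simp
  also have "\<dots> = (\<Sum>k\<in>?K. x ^ k)" by (simp add: poly_sum poly_monom)
  finally show ?thesis .
qed

lemma weight_ge3:
  fixes \<alpha> :: "'a::field" and c :: "'a poly"
  assumes ch: "CHAR('a) = 2" and pr: "prim_root n \<alpha>" and n0: "n > 0"
    and bin: "binary_poly c" and c0: "c \<noteq> 0" and deg: "degree c < n"
    and ri: "poly c (\<alpha> ^ i) = 0" and rj: "poly c (\<alpha> ^ j) = 0"
    and g1: "gcd n (gcd i j) = 1"
  shows "hweight c \<ge> 3"
proof (rule ccontr)
  let ?K = "{k. Polynomial.coeff c k \<noteq> 0}"
  assume "\<not> hweight c \<ge> 3"
  then have lt: "card ?K < 3" unfolding hweight_def by simp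
  have ne: "?K \<noteq> {}" using c0 by (metis (mono_tags, lifting) Collect_empty_eq leading_coeff_0_iff)
  have fin: "finite ?K"
    by (rule finite_subset[of _ "{..degree c}"]) (auto intro: le_degree)
  have anz: "\<alpha> \<noteq> 0" using prim_nonzero[OF pr n0] .
  have Kn: "k < n" if "k \<in> ?K" for k using that deg le_degree[of c k] by simp
  have "card ?K \<noteq> 0" using ne fin by simp
  then consider "card ?K = 1" | "card ?K = 2" using lt by linarith
  then show False
  proof cases
    case 1
    then obtain a where Ka: "?K = {a}" by (auto simp: card_Suc_eq)
    have "poly c (\<alpha> ^ i) = (\<alpha> ^ i) ^ a" using binary_sum[OF bin, of "\<alpha> ^ i"] Ka by simp
    then show False using ri anz by simp
  next
    case 2
    then obtain a b where Kab: "?K = {a, b}" "a \<noteq> b" by (auto simp: card_2_iff)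
    define x where "x = min a b"
    define y where "y = max a b"
    have Kxy: "?K = {x, y}" "x < y" using Kab unfolding x_def y_def by (auto simp: min_def max_def)
    have yn: "y < n" using Kn Kxy by auto
    have key: "n dvd (y - x) * l" if rl: "poly c (\<alpha> ^ l) = 0" for l
    proof -
      have "poly c (\<alpha> ^ l) = (\<alpha> ^ l) ^ x + (\<alpha> ^ l) ^ y"
        using binary_sum[OF bin, of "\<alpha> ^ l"] Kxy by simp
      then have "(\<alpha> ^ l) ^ x = (\<alpha> ^ l) ^ y" using rl char2_add_eq0[OF ch] by metis
      then have "\<alpha> ^ (l * x) = \<alpha> ^ (l * y)" by (simp add: power_mult)
      moreover have "l * x \<le> l * y" using Kxy by simp
      ultimately have "n dvd (l * y - l * x)" using pow_eq_dvd[OF pr n0] by blast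
      then show ?thesis by (simp add: diff_mult_distrib2 mult.commute)
    qed
    have "n dvd gcd ((y - x) * n) (gcd ((y - x) * i) ((y - x) * j))"
      using key[OF ri] key[OF rj] by simp
    also have "\<dots> = (y - x) * gcd n (gcd i j)"
      by (simp only: gcd_mult_distrib_nat[symmetric])
    finally have "n dvd (y - x)" using g1 by simp
    moreover have "0 < y - x" "y - x < n" using Kxy yn by auto
    ultimately show False using nat_dvd_not_less by blast
  qed
qed


lemma exists_e:
  fixes \<beta> :: "'a::field"
  assumes ch: "CHAR('a) = 2" and pr: "prim_root m \<beta>" and m2: "m \<ge> 2"
    and gm: "2 ^ g = m + 1" and r: "0 < r" "r < m" "coprime r m"
  shows "\<exists>e<m. \<beta> ^ (r * e) = 1 + \<beta> ^ r"
proof -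
  have m0: "m > 0" using m2 by simp
  have bm: "\<beta> ^ m = 1" using pr unfolding prim_root_def by simp
  have bnz: "\<beta> \<noteq> 0" using prim_nonzero[OF pr m0] .
  define v where "v = 1 + \<beta> ^ r"
  have br1: "\<beta> ^ r \<noteq> 1" using pr r unfolding prim_root_def by simp
  have vnz: "v \<noteq> 0"
  proof
    assume "v = 0"
    then have "1 = \<beta> ^ r" using char2_add_eq0[OF ch] unfolding v_def by blast
    then show False using br1 by simp
  qed
  have bg: "\<beta> ^ (2 ^ g) = \<beta>" using gm bm by simp
  have "v ^ (2 ^ g) = 1 ^ (2 ^ g) + (\<beta> ^ r) ^ (2 ^ g)" unfolding v_def by (rule char2_frob[OF ch])
  also have "(\<beta> ^ r) ^ (2 ^ g) = (\<beta> ^ (2 ^ g)) ^ r" by (simp flip: power_mult add: mult.commute)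
  finally have "v ^ (2 ^ g) = v" using bg unfolding v_def by simp
  then have "v ^ m * v = 1 * v" using gm by simp
  then have vm: "v ^ m = 1" using vnz by (metis mult_right_cancel)
  define p :: "'a poly" where "p = [:-1:] + Polynomial.monom 1 m"
  have dp: "degree p = m" unfolding p_def
    by (subst degree_add_eq_right) (use m0 in \<open>auto simp: degree_monom_eq\<close>)
  have pnz: "p \<noteq> 0" using dp m0 by auto
  have polyp: "poly p x = x ^ m - 1" for x unfolding p_def by (simp add: poly_monom)
  let ?R = "{x. poly p x = 0}"
  let ?S = "(\<lambda>k. \<beta> ^ (r * k)) ` {..<m}"
  have finR: "finite ?R" using poly_roots_finite[OF pnz] .
  have cR: "card ?R \<le> m" using card_poly_roots_bound[OF pnz] dp by simp
  have SR: "?S \<subseteq> ?R"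
  proof
    fix x assume "x \<in> ?S"
    then obtain k where "x = \<beta> ^ (r * k)" by auto
    then have "x ^ m = (\<beta> ^ m) ^ (r * k)" by (simp flip: power_mult add: mult.commute)
    then show "x \<in> ?R" using bm polyp by simp
  qed
  have injS: "inj_on (\<lambda>k. \<beta> ^ (r * k)) {..<m}"
  proof (rule inj_onI)
    fix k k' assume kk: "k \<in> {..<m}" "k' \<in> {..<m}" "\<beta> ^ (r * k) = \<beta> ^ (r * k')"
    have gen: "a = b" if ab: "a < m" "b < m" "a \<le> b" "\<beta> ^ (r * a) = \<beta> ^ (r * b)" for a b
    proof -
      have "r * a \<le> r * b" using ab by simp
      then have "m dvd (r * b - r * a)" using pow_eq_dvd[OF pr m0] ab by blast
      then have "m dvd r * (b - a)" by (simp add: diff_mult_distrib2)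
      then have "m dvd (b - a)" using r(3) by (metis coprime_commute coprime_dvd_mult_right_iff)
      moreover have "b - a < m" using ab by simp
      ultimately have "b - a = 0" using nat_dvd_not_less by (metis neq0_conv)
      then show ?thesis using ab by simp
    qed
    show "k = k'"
    proof (cases "k \<le> k'")
      case True then show ?thesis using gen kk by auto
    next
      case False then show ?thesis using gen[of k' k] kk by auto
    qed
  qed
  have cS: "card ?S = m" using card_image[OF injS] by simp
  have "?S = ?R" using card_subset_eq[OF finR SR] cS cR card_mono[OF finR SR] by simp
  moreover have "v \<in> ?R" using vm polyp by simp
  ultimately have "v \<in> ?S" by simp
  then show ?thesis unfolding v_def by auto
qed


lemma exists_cw:
  fixes \<alpha> :: "'a::field"
  assumes ch: "CHAR('a) = 2" and pr: "prim_root n \<alpha>" and n0: "n > 0"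
    and mn: "m dvd n" and m2: "m \<ge> 2"
    and gm: "2 ^ g = m + 1" and r: "0 < r" "r < m" "coprime r m"
  shows "\<exists>c. binary_poly c \<and> c \<noteq> 0 \<and> degree c < n \<and> hweight c = 3 \<and>
     (\<forall>t. t mod m \<in> cyc_coset m r \<longrightarrow> poly c (\<alpha> ^ t) = 0)"
proof -
  define s where "s = n div m"
  have ns: "n = m * s" using mn unfolding s_def by simp
  have s0: "s > 0" using ns n0 by (metis mult_0_right neq0_conv)
  define \<beta> where "\<beta> = \<alpha> ^ s"
  have an: "\<alpha> ^ n = 1" using pr unfolding prim_root_def by simp
  have bm: "\<beta> ^ m = 1" unfolding \<beta>_def using an ns by (simp flip: power_mult add: mult.commute)
  have prb: "prim_root m \<beta>" unfolding prim_root_def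
  proof (intro conjI allI impI bm)
    fix k assume k: "0 < k \<and> k < m"
    have "0 < s * k" "s * k < n" using k s0 ns by auto
    then have "\<alpha> ^ (s * k) \<noteq> 1" using pr unfolding prim_root_def by blast
    then show "\<beta> ^ k \<noteq> 1" unfolding \<beta>_def by (simp add: power_mult)
  qed
  obtain e where e: "e < m" "\<beta> ^ (r * e) = 1 + \<beta> ^ r"
    using exists_e[OF ch prb m2 gm r] by blast
  have e0: "e \<noteq> 0"
  proof
    assume "e = 0"
    then have "1 + \<beta> ^ r = 1" using e by simp
    moreover have "\<beta> \<noteq> 0" using prim_nonzero[OF prb] m2 by simp
    ultimately show False by simp
  qed
  have e1: "e \<noteq> 1"
  proof
    assume "e = 1"
    then have "\<beta> ^ r + 1 = 0 + \<beta> ^ r" using e by (simp add: add.commute)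
    then show False by simp
  qed
  have e2: "e \<ge> 2" using e0 e1 by simp
  have lt1: "s < e * s" using e2 s0 by simp
  have lt2: "e * s < n" using e(1) ns s0 by simp
  define c :: "'a poly" where "c = 1 + Polynomial.monom 1 s + Polynomial.monom 1 (e * s)"
  have cc: "Polynomial.coeff c k = (if k = 0 \<or> k = s \<or> k = e * s then 1 else 0)" for k
    unfolding c_def using s0 lt1 by (auto simp: coeff_monom coeff_1)
  have bin: "binary_poly c" unfolding binary_poly_def using cc by simp
  have K: "{k. Polynomial.coeff c k \<noteq> 0} = {0, s, e * s}" using cc by auto
  have hw: "hweight c = 3" unfolding hweight_def K using s0 lt1 by simp
  have cnz: "c \<noteq> 0" using cc[of 0] by auto
  have deg: "degree c < n"
  proof -
    have "degree c \<le> n - 1"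
    proof (rule degree_le, intro allI impI)
      fix k assume "n - 1 < k"
      then have "k \<noteq> 0" "k \<noteq> s" "k \<noteq> e * s" using lt1 lt2 by linarith+
      then show "Polynomial.coeff c k = 0" using cc by simp
    qed
    then show ?thesis using n0 by simp
  qed
  have roots: "poly c (\<alpha> ^ t) = 0" if t: "t mod m \<in> cyc_coset m r" for t
  proof -
    obtain k where k: "t mod m = r * 2 ^ k mod m" using t unfolding cyc_coset_def by auto
    define w where "w = \<beta> ^ r"
    have bt: "\<beta> ^ t = w ^ (2 ^ k)"
    proof -
      have "\<beta> ^ t = \<beta> ^ (t mod m)" using pow_mod_eq[OF bm] .
      also have "\<dots> = \<beta> ^ (r * 2 ^ k mod m)" using k by simp
      also have "\<dots> = \<beta> ^ (r * 2 ^ k)" using pow_mod_eq[OF bm] by simp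
      finally show ?thesis unfolding w_def by (simp add: power_mult)
    qed
    have we: "w ^ e = 1 + w" unfolding w_def using e(2) by (simp add: power_mult)
    have "poly c (\<alpha> ^ t) = 1 + (\<alpha> ^ t) ^ s + (\<alpha> ^ t) ^ (e * s)"
      unfolding c_def by (simp add: poly_monom)
    also have "(\<alpha> ^ t) ^ s = \<beta> ^ t" unfolding \<beta>_def by (simp flip: power_mult add: mult.commute)
    also have "(\<alpha> ^ t) ^ (e * s) = (\<beta> ^ t) ^ e" unfolding \<beta>_def
      by (simp flip: power_mult add: mult.commute mult.left_commute)
    also have "(\<beta> ^ t) ^ e = (w ^ e) ^ (2 ^ k)" using bt by (simp flip: power_mult add: mult.commute)
    also have "1 + \<beta> ^ t + (w ^ e) ^ (2 ^ k) = (1 + w + w ^ e) ^ (2 ^ k)"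
      using bt char2_frob[OF ch] by simp
    also have "1 + w + w ^ e = 0" using we char2_add_self[OF ch, of "1 + w"] by (simp add: add.assoc)
    finally show ?thesis by simp
  qed
  show ?thesis using bin cnz deg hw roots by blast
qed

theorem lemma2:
  fixes \<alpha> :: "'a::field" and n i j g r :: nat
  assumes "CHAR('a) = 2"
    and "odd n" and "n > 0"
    and "prim_root n \<alpha>"
    and "i < j" and "j \<le> n - 1"
    and "j \<notin> cyc_coset n i"
    and "g > 0" and "(2 ^ g - 1) dvd n"
    and "0 < r" and "r < 2 ^ g - 1" and "coprime r (2 ^ g - 1)"
    and "i mod (2 ^ g - 1) \<in> cyc_coset (2 ^ g - 1) r"
    and "j mod (2 ^ g - 1) \<in> cyc_coset (2 ^ g - 1) r"
  shows "min_dist (cyclic_code n (min_poly n \<alpha> i * min_poly n \<alpha> j)) \<le> 3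
    \<and> (gcd n (gcd i j) = 1 \<longrightarrow>
         min_dist (cyclic_code n (min_poly n \<alpha> i * min_poly n \<alpha> j)) = 3)"
proof -
  define m :: nat where "m = 2 ^ g - 1"
  have gm: "2 ^ g = m + 1" unfolding m_def by simp
  have m2: "m \<ge> 2" using assms(10,11) unfolding m_def by linarith
  have mn: "m dvd n" using assms(9) unfolding m_def .
  have n0: "n > 0" using assms(3) .
  have jn: "j < n" using assms(6) n0 by linarith
  have in': "i < n" using assms(5) jn by linarith
  obtain c where c: "binary_poly c" "c \<noteq> 0" "degree c < n" "hweight c = 3"
     "\<And>t. t mod m \<in> cyc_coset m r \<Longrightarrow> poly c (\<alpha> ^ t) = 0"
    using exists_cw[OF assms(1,4) n0 mn m2 gm assms(10) assms(11,12)[folded m_def]] by blast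
  have G: "min_poly n \<alpha> i * min_poly n \<alpha> j dvd c"
  proof (rule gen_dvd[OF assms(4) n0 assms(2) jn assms(7)])
    fix t assume "t \<in> cyc_coset n i \<union> cyc_coset n j"
    then have "t mod m \<in> cyc_coset m r"
      using coset_mod[OF mn, of i r t] coset_mod[OF mn, of j r t] assms(13,14) unfolding m_def by blast
    then show "poly c (\<alpha> ^ t) = 0" using c(5) by blast
  qed
  let ?C = "cyclic_code n (min_poly n \<alpha> i * min_poly n \<alpha> j)"
  let ?X = "{hweight c |c. c \<in> ?C \<and> c \<noteq> 0}"
  have cC: "c \<in> ?C" unfolding cyclic_code_def using c G by blast
  have 3: "3 \<in> ?X" using cC c by (metis (mono_tags, lifting) mem_Collect_eq)
  have le: "min_dist ?C \<le> 3" unfolding min_dist_def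
    by (rule cInf_lower[OF 3]) (rule bdd_belowI[of _ 0], simp)
  moreover have "gcd n (gcd i j) = 1 \<longrightarrow> min_dist ?C = 3"
  proof
    assume g1: "gcd n (gcd i j) = 1"
    have "3 \<le> x" if xX: "x \<in> ?X" for x
    proof -
      obtain c' where c': "x = hweight c'" "c' \<in> ?C" "c' \<noteq> 0" using xX by blast
      have b: "binary_poly c'" "degree c' < n" and d: "min_poly n \<alpha> i * min_poly n \<alpha> j dvd c'"
        using c' unfolding cyclic_code_def by auto
      have ri: "poly c' (\<alpha> ^ i) = 0"
        using factor_root[OF n0 in'] dvd_mult_left[OF d] by blast
      have rj: "poly c' (\<alpha> ^ j) = 0"
        using factor_root[OF n0 jn] dvd_mult_right[OF d] by blast
      show ?thesis using weight_ge3[OF assms(1,4) n0 b(1) c'(3) b(2) ri rj g1] c'(1) by simp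
    qed
    then have "3 \<le> min_dist ?C" unfolding min_dist_def
      using 3 by (intro cInf_greatest) auto
    then show "min_dist ?C = 3" using le by simp
  qed
  ultimately show ?thesis by blast
qed

end
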